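(* Let $N=\{1,\ldots,n\}$. The following hold for the polytope $\mathscr{BG}_+(n)$: (1) each equality $v(S)=0$, $S\neq\varnothing,N$, defines a facet of $\mathscr{BG}_+(n)$; (2) each equality $\sum_{S\in\mathscr{B}}\lambda^{\mathscr{B}}_Sv(S)=1$, $\mathscr{B}\in\mathfrak{B}^*(n)$, defines a facet of $\mathscr{BG}_+(n)$; (3) the number of facets of $\mathscr{BG}_+(n)$ is $2^n+b(n)-3$, where $b(n)$ is the number of minimal balanced collections on $N$.
   Context: A game on $N$ is a map $v:2^N\to\mathbb{R}$ with $v(\varnothing)=0$. A collection $\mathscr{B}$ of nonempty subsets of $N$ is balanced if there exist positive weights $(\lambda_S)_{S\in\mathscr{B}}$ with $\sum_{S\in\mathscr{B},S\ni i}\lambda_S=1$ for all $i\in N$; minimal balanced if no proper subcollection is balanced, with unique weights $\lambda^{\mathscr{B}}_S$. $b(n)$ counts all minimal balanced collections on $N$ (including $\{N\}$), and $\mathfrak{B}^*(n)$ is the set of minimal balanced collections other than $\{N\}$. $\mathscr{BG}_+(n)=\{v: v(S)\geqslant0\ \forall\varnothing\neq S\subsetneq N,\ v(N)=1,\ \sum_{S\in\mathscr{B}}\lambda^{\mathscr{B}}_Sv(S)\leqslant1\ \forall\mathscr{B}\in\mathfrak{B}^*(n)\}$, viewed in $\mathbb{R}^{2^N\setminus\{\varnothing,N\}}$. *)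

theory Defs
  imports "HOL-Analysis.Analysis"
begin

text \<open>Players form a finite type 'n; the grand coalition N is UNIV, n = CARD('n).
  A game is a vector indexed by all coalitions (real ^ 'n set).\<close>

definition balanced :: "('n::finite) set set \<Rightarrow> bool" where
  "balanced B \<longleftrightarrow> (\<forall>S\<in>B. S \<noteq> {}) \<and>
     (\<exists>w::'n set \<Rightarrow> real. (\<forall>S\<in>B. w S > 0) \<and>
        (\<forall>i::'n. (\<Sum>S\<in>{S\<in>B. i \<in> S}. w S) = 1))"

definition minimal_balanced :: "('n::finite) set set \<Rightarrow> bool" where
  "minimal_balanced B \<longleftrightarrow> balanced B \<and> (\<forall>B'. B' \<subset> B \<longrightarrow> \<not> balanced B')"

text \<open>The (unique, for minimal balanced collections) balancing weights, set to 0 outside B.\<close>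
definition bal_weight :: "('n::finite) set set \<Rightarrow> 'n set \<Rightarrow> real" where
  "bal_weight B = (THE w. (\<forall>S\<in>B. w S > 0) \<and> (\<forall>S. S \<notin> B \<longrightarrow> w S = 0) \<and>
        (\<forall>i::'n. (\<Sum>S\<in>{S\<in>B. i \<in> S}. w S) = 1))"

text \<open>b(n): number of all minimal balanced collections on N (including {N}).\<close>
definition num_min_bal :: "('n::finite) itself \<Rightarrow> nat" where
  "num_min_bal _ = card {B :: 'n set set. minimal_balanced B}"

text \<open>BG_+(n), embedded in R^(2^N) via v({}) = 0 and v(N) = 1.\<close>
definition BG_plus :: "(real ^ ('n::finite set)) set" where
  "BG_plus = {v. v $ {} = 0 \<and> v $ UNIV = 1 \<and>
      (\<forall>S. S \<noteq> {} \<and> S \<noteq> UNIV \<longrightarrow> v $ S \<ge> 0) \<and>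
      (\<forall>B. minimal_balanced B \<and> B \<noteq> {UNIV} \<longrightarrow>
              (\<Sum>S\<in>B. bal_weight B S * v $ S) \<le> 1)}"

end

theory Submission
  imports Defs
begin


lemma mb_unique:
  fixes B :: "('n::finite) set set" and w1 w2 :: "'n set \<Rightarrow> real"
  assumes mb: "minimal_balanced B"
    and p1: "\<forall>S\<in>B. w1 S > 0" and z1: "\<forall>S. S \<notin> B \<longrightarrow> w1 S = 0"
    and s1: "\<forall>i::'n. (\<Sum>S\<in>{S\<in>B. i \<in> S}. w1 S) = 1"
    and p2: "\<forall>S\<in>B. w2 S > 0" and z2: "\<forall>S. S \<notin> B \<longrightarrow> w2 S = 0"
    and s2: "\<forall>i::'n. (\<Sum>S\<in>{S\<in>B. i \<in> S}. w2 S) = 1"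
  shows "w1 = w2"
proof (rule ccontr)
  assume ne: "w1 \<noteq> w2"
  then obtain S0 where "w1 S0 \<noteq> w2 S0" by auto
  with z1 z2 have S0B: "S0 \<in> B" by metis
  have nemp: "\<forall>S\<in>B. S \<noteq> {}" using mb unfolding minimal_balanced_def balanced_def by auto
  define Neg where "Neg = {S\<in>B. w2 S < w1 S}"
  have finB: "finite B" by simp
  have "Neg \<noteq> {}"
  proof
    assume e: "Neg = {}"
    have ge: "\<forall>S\<in>B. w1 S \<le> w2 S"
    proof
      fix S assume "S \<in> B"
      show "w1 S \<le> w2 S"
      proof (rule ccontr)
        assume "\<not> w1 S \<le> w2 S"
        then have "w2 S < w1 S" by linarith
        then have "S \<in> Neg" using \<open>S \<in> B\<close> unfolding Neg_def by simp
        then show False using e by simp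
      qed
    qed
    then have lt: "w1 S0 < w2 S0" using \<open>w1 S0 \<noteq> w2 S0\<close> S0B by force
    obtain i where i: "i \<in> S0" using nemp S0B by auto
    have "(\<Sum>S\<in>{S\<in>B. i \<in> S}. w1 S) < (\<Sum>S\<in>{S\<in>B. i \<in> S}. w2 S)"
      apply (rule sum_strict_mono_ex1) using ge lt i S0B by auto
    then show False using s1 s2 by simp
  qed
  have finN: "finite Neg" unfolding Neg_def by simp
  define r where "r = (\<lambda>S. w1 S / (w1 S - w2 S))"
  define t where "t = Min (r ` Neg)"
  have "t \<in> r ` Neg" unfolding t_def using finN \<open>Neg \<noteq> {}\<close> by (intro Min_in) auto
  then obtain T0 where T0: "T0 \<in> Neg" "t = r T0" by auto
  have tle: "\<And>S. S \<in> Neg \<Longrightarrow> t \<le> r S" unfolding t_def using finN by simp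
  have T0B: "T0 \<in> B" and T0lt: "w2 T0 < w1 T0" using T0 unfolding Neg_def by auto
  have tpos: "t > 0" using T0 T0B T0lt p1 unfolding r_def by simp
  define w where "w = (\<lambda>S. w1 S + t * (w2 S - w1 S))"
  have wge: "\<forall>S\<in>B. w S \<ge> 0"
  proof
    fix S assume SB: "S \<in> B"
    show "w S \<ge> 0"
    proof (cases "w2 S < w1 S")
      case True
      then have "S \<in> Neg" using SB unfolding Neg_def by auto
      then have "t \<le> w1 S / (w1 S - w2 S)" using tle r_def by simp
      then have "t * (w1 S - w2 S) \<le> w1 S" using True by (simp add: pos_le_divide_eq)
      then show ?thesis unfolding w_def by (simp add: algebra_simps)
    next
      case False
      then show ?thesis unfolding w_def using tpos p1 SB
        by (metis add_nonneg_nonneg less_eq_real_def mult_nonneg_nonneg not_less diff_ge_0_iff_ge)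
    qed
  qed
  have wT0: "w T0 = 0" unfolding w_def T0 r_def using T0lt by (simp add: field_simps)
  define B' where "B' = {S\<in>B. w S > 0}"
  have "T0 \<notin> B'" unfolding B'_def using wT0 by simp
  moreover have "B' \<subseteq> B" unfolding B'_def by auto
  ultimately have sub: "B' \<subset> B" using T0B by blast
  have "balanced B'"
    unfolding balanced_def
  proof (intro conjI exI[of _ w])
    show "\<forall>S\<in>B'. S \<noteq> {}" using nemp B'_def by auto
    show "\<forall>S\<in>B'. 0 < w S" using B'_def by auto
    show "\<forall>i. (\<Sum>S\<in>{S \<in> B'. i \<in> S}. w S) = 1"
    proof
      fix i
      have "(\<Sum>S\<in>{S \<in> B'. i \<in> S}. w S) = (\<Sum>S\<in>{S \<in> B. i \<in> S}. w S)"
        apply (rule sum.mono_neutral_left) using wge unfolding B'_def by force+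
      also have "\<dots> = (\<Sum>S\<in>{S \<in> B. i \<in> S}. w1 S) + t * ((\<Sum>S\<in>{S \<in> B. i \<in> S}. w2 S) - (\<Sum>S\<in>{S \<in> B. i \<in> S}. w1 S))"
        unfolding w_def by (simp add: sum.distrib sum_distrib_left sum_subtractf algebra_simps)
      also have "\<dots> = 1" using s1 s2 by simp
      finally show "(\<Sum>S\<in>{S \<in> B'. i \<in> S}. w S) = 1" .
    qed
  qed
  then show False using mb sub unfolding minimal_balanced_def by blast
qed

lemma bal_weight_props:
  fixes B :: "('n::finite) set set"
  assumes mb: "minimal_balanced B"
  shows "(\<forall>S\<in>B. bal_weight B S > 0) \<and> (\<forall>S. S \<notin> B \<longrightarrow> bal_weight B S = 0) \<and>
        (\<forall>i::'n. (\<Sum>S\<in>{S\<in>B. i \<in> S}. bal_weight B S) = 1)"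
proof -
  obtain w :: "'n set \<Rightarrow> real" where w: "\<forall>S\<in>B. w S > 0" "\<forall>i::'n. (\<Sum>S\<in>{S\<in>B. i \<in> S}. w S) = 1"
    using mb unfolding minimal_balanced_def balanced_def by blast
  define w' where "w' = (\<lambda>S. if S \<in> B then w S else 0)"
  have P: "(\<forall>S\<in>B. w' S > 0) \<and> (\<forall>S. S \<notin> B \<longrightarrow> w' S = 0) \<and>
        (\<forall>i::'n. (\<Sum>S\<in>{S\<in>B. i \<in> S}. w' S) = 1)"
    using w unfolding w'_def by auto
  show ?thesis unfolding bal_weight_def
    apply (rule theI[of _ w'])
    using P apply simp
    using mb_unique[OF mb] P by blast
qed



definition Cs :: "('n::finite) set set" where "Cs = {S. S \<noteq> {} \<and> S \<noteq> UNIV}"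
definition MBs :: "('n::finite) set set set" where "MBs = {B. minimal_balanced B \<and> B \<noteq> {UNIV}}"
definition mk :: "(('n::finite) set \<Rightarrow> real) \<Rightarrow> real ^ ('n set)" where
  "mk f = (\<chi> S. if S = {} then 0 else if S = UNIV then 1 else f S)"
definition Aff :: "(real ^ (('n::finite) set)) set" where "Aff = {v. v $ {} = 0 \<and> v $ UNIV = 1}"
definition Aa :: "(('n::finite) set + 'n set set) \<Rightarrow> real ^ ('n set)" where
  "Aa i = (case i of Inl S \<Rightarrow> - axis S 1 | Inr B \<Rightarrow> (\<chi> S. bal_weight B S))"
definition bb :: "(('n::finite) set + 'n set set) \<Rightarrow> real" where
  "bb i = (case i of Inl S \<Rightarrow> 0 | Inr B \<Rightarrow> 1)"
definition gg :: "(('n::finite) set + 'n set set) \<Rightarrow> (real ^ ('n set)) set" where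
  "gg i = {x. Aa i \<bullet> x \<le> bb i}"
definition Idx :: "(('n::finite) set + 'n set set) set" where "Idx = Inl ` Cs \<union> Inr ` MBs"
definition eps :: "('n::finite) set set \<Rightarrow> 'n set set \<Rightarrow> real" where
  "eps B B' = (\<Sum>S\<in>B'. bal_weight B' S * (if S \<in> B then 0 else 1))"

lemma balanced_UNIV: "balanced {UNIV :: ('n::finite) set}"
proof -
  have e: "\<And>i::'n. {S\<in>{UNIV::'n set}. i \<in> S} = {UNIV}" by auto
  show ?thesis unfolding balanced_def e by (intro conjI exI[of _ "\<lambda>_. 1"]) auto
qed

lemma mb_sub_Cs:
  assumes "B \<in> MBs" shows "B \<subseteq> Cs"
proof
  fix S assume SB: "S \<in> B"
  have mb: "minimal_balanced B" and ne: "B \<noteq> {UNIV}" using assms unfolding MBs_def by auto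
  have "S \<noteq> {}" using mb SB unfolding minimal_balanced_def balanced_def by auto
  moreover have "S \<noteq> UNIV"
  proof
    assume "S = UNIV"
    then have "{UNIV} \<subset> B" using SB ne by auto
    then show False using mb balanced_UNIV unfolding minimal_balanced_def by blast
  qed
  ultimately show "S \<in> Cs" unfolding Cs_def by auto
qed

lemma w_pos: "minimal_balanced B \<Longrightarrow> S \<in> B \<Longrightarrow> bal_weight B S > 0"
  using bal_weight_props by blast
lemma w_zero: "minimal_balanced B \<Longrightarrow> S \<notin> B \<Longrightarrow> bal_weight B S = 0"
  using bal_weight_props by blast
lemma w_sum: "minimal_balanced B \<Longrightarrow> (\<Sum>S\<in>{S\<in>B. i \<in> S}. bal_weight B S) = 1"
  using bal_weight_props by blast
lemma w_nonneg: "minimal_balanced B \<Longrightarrow> bal_weight B S \<ge> 0"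
  using w_pos w_zero by (metis less_eq_real_def)

lemma w_le1:
  fixes B :: "('n::finite) set set"
  assumes mb: "minimal_balanced B" and T: "T \<noteq> {}"
  shows "bal_weight B T \<le> 1"
proof (cases "T \<in> B")
  case True
  obtain i where i: "i \<in> T" using T by auto
  have "bal_weight B T \<le> (\<Sum>S\<in>{S\<in>B. i \<in> S}. bal_weight B S)"
    apply (rule member_le_sum) using True i w_nonneg[OF mb] by auto
  then show ?thesis using w_sum[OF mb] by simp
next
  case False then show ?thesis using w_zero[OF mb] by simp
qed

lemma w_card:
  fixes B :: "('n::finite) set set"
  assumes mb: "minimal_balanced B"
  shows "(\<Sum>S\<in>B. bal_weight B S * real (card S)) = real CARD('n)"
proof -
  have "(\<Sum>S\<in>B. bal_weight B S * real (card S))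
      = (\<Sum>S\<in>B. \<Sum>i\<in>(UNIV::'n set). (if i \<in> S then bal_weight B S else 0))"
    by (rule sum.cong) (auto simp: sum.If_cases)
  also have "\<dots> = (\<Sum>i\<in>(UNIV::'n set). \<Sum>S\<in>B. (if i \<in> S then bal_weight B S else 0))"
    by (rule sum.swap)
  also have "\<dots> = (\<Sum>i\<in>(UNIV::'n set). \<Sum>S\<in>{S\<in>B. i \<in> S}. bal_weight B S)"
    by (rule sum.cong) (auto simp: sum.inter_filter)
  also have "\<dots> = real CARD('n)" using w_sum[OF mb] by simp
  finally show ?thesis .
qed

lemma mb_other:
  assumes "minimal_balanced B" "minimal_balanced B'" "B' \<noteq> B"
  shows "\<exists>S\<in>B'. S \<notin> B"
proof (rule ccontr)
  assume "\<not> ?thesis"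
  then have "B' \<subset> B" using assms(3) by auto
  then show False using assms unfolding minimal_balanced_def by blast
qed

lemma eps_self: "eps B B = 0" unfolding eps_def by simp

lemma eps_pos:
  assumes "minimal_balanced B" "minimal_balanced B'" "B' \<noteq> B"
  shows "eps B B' > 0"
proof -
  obtain S where S: "S \<in> B'" "S \<notin> B" using mb_other[OF assms] by auto
  have "0 < bal_weight B' S * (if S \<in> B then 0 else 1)" using S w_pos[OF assms(2)] by simp
  also have "\<dots> \<le> eps B B'" unfolding eps_def
    apply (rule member_le_sum) using S w_nonneg[OF assms(2)] by auto
  finally show ?thesis .
qed



lemma mk_nth: "S \<in> Cs \<Longrightarrow> mk f $ S = f S" unfolding mk_def Cs_def by simp
lemma mk_Aff: "mk f \<in> Aff" unfolding mk_def Aff_def by simp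

lemma mk_sum:
  assumes "B \<in> MBs"
  shows "(\<Sum>S\<in>B. bal_weight B S * mk f $ S) = (\<Sum>S\<in>B. bal_weight B S * f S)"
  using mb_sub_Cs[OF assms] mk_nth by (intro sum.cong) auto

lemma inner_Inl: "Aa (Inl S) \<bullet> x = - x $ S"
  unfolding Aa_def by (simp add: inner_axis')

lemma inner_Inr:
  assumes "B \<in> MBs"
  shows "Aa (Inr B) \<bullet> x = (\<Sum>S\<in>B. bal_weight B S * x $ S)"
proof -
  have mb: "minimal_balanced B" using assms MBs_def by auto
  have "Aa (Inr B) \<bullet> x = (\<Sum>S\<in>UNIV. bal_weight B S * x $ S)"
    unfolding Aa_def inner_vec_def by simp
  also have "\<dots> = (\<Sum>S\<in>B. bal_weight B S * x $ S)"
    by (rule sum.mono_neutral_right) (auto simp: w_zero[OF mb])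
  finally show ?thesis .
qed

lemma gg_Inl: "x \<in> gg (Inl S) \<longleftrightarrow> x $ S \<ge> 0"
  unfolding gg_def by (simp add: inner_Inl bb_def)

lemma gg_Inr: "B \<in> MBs \<Longrightarrow> x \<in> gg (Inr B) \<longleftrightarrow> (\<Sum>S\<in>B. bal_weight B S * x $ S) \<le> 1"
  unfolding gg_def by (simp add: inner_Inr bb_def)

lemma Idx_char: "(\<forall>i\<in>Idx. x \<in> gg i) \<longleftrightarrow>
   (\<forall>S\<in>Cs. x $ S \<ge> 0) \<and> (\<forall>B\<in>MBs. (\<Sum>S\<in>B. bal_weight B S * x $ S) \<le> 1)"
  by (simp add: Idx_def ball_Un gg_Inl gg_Inr)

lemma BG_char: "x \<in> BG_plus \<longleftrightarrow> x \<in> Aff \<and> (\<forall>i\<in>Idx. x \<in> gg i)"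
  unfolding Idx_char BG_plus_def Aff_def Cs_def MBs_def by blast

lemma mk_gg_Inl: "S \<in> Cs \<Longrightarrow> mk f \<in> gg (Inl S) \<longleftrightarrow> f S \<ge> 0"
  by (simp add: gg_Inl mk_nth)

lemma mk_gg_Inr: "B \<in> MBs \<Longrightarrow> mk f \<in> gg (Inr B) \<longleftrightarrow> (\<Sum>S\<in>B. bal_weight B S * f S) \<le> 1"
  by (simp add: gg_Inr mk_sum)

lemma mk_BG:
  "mk f \<in> BG_plus \<longleftrightarrow> (\<forall>S\<in>Cs. f S \<ge> 0) \<and> (\<forall>B\<in>MBs. (\<Sum>S\<in>B. bal_weight B S * f S) \<le> 1)"
  by (simp add: BG_char mk_Aff Idx_def ball_Un mk_gg_Inl mk_gg_Inr)

lemma card_pos_Cs: "S \<in> Cs \<Longrightarrow> card S \<ge> 1"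
  unfolding Cs_def by (simp add: Suc_le_eq card_gt_0_iff)

definition pt :: "('n::finite) set set \<Rightarrow> real \<Rightarrow> 'n set \<Rightarrow> real" where
  "pt B D S = (2 * real (card S) - (if S \<in> B then 0 else 1)) / D"

lemma pt_sum:
  fixes B B' :: "('n::finite) set set"
  assumes "minimal_balanced B'"
  shows "(\<Sum>S\<in>B'. bal_weight B' S * pt B D S) = (2 * real CARD('n) - eps B B') / D"
proof -
  have "(\<Sum>S\<in>B'. bal_weight B' S * pt B D S)
     = (2 * (\<Sum>S\<in>B'. bal_weight B' S * real (card S)) - eps B B') / D"
    unfolding pt_def eps_def
    by (simp add: sum_divide_distrib[symmetric] sum_distrib_left sum_subtractf algebra_simps)
  then show ?thesis using w_card[OF assms] by simp
qed

lemma pt_pos: "S \<in> Cs \<Longrightarrow> D > 0 \<Longrightarrow> pt B D S > 0"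
  unfolding pt_def using card_pos_Cs[of S] by (auto intro!: divide_pos_pos)



lemma eps_nonneg: "minimal_balanced B' \<Longrightarrow> eps B B' \<ge> 0"
  unfolding eps_def using w_nonneg by (intro sum_nonneg) auto

lemma card_ge1: "real CARD('n::finite) \<ge> 1"
  using card_ge_0_finite[of "UNIV :: 'n set"] by simp

lemma viol:
  fixes i :: "('n::finite) set + 'n set set"
  assumes "i \<in> Idx"
  shows "\<exists>x\<in>Aff. x \<notin> gg i \<and> (\<forall>j\<in>Idx. j \<noteq> i \<longrightarrow> x \<in> gg j)"
proof (cases i)
  case (Inl S)
  then have S: "S \<in> Cs" using assms unfolding Idx_def by auto
  define f :: "'n set \<Rightarrow> real" where "f = (\<lambda>X. if X = S then -1 else 0)"
  have "mk f \<notin> gg i" using Inl mk_gg_Inl[OF S, of f] f_def by simp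
  moreover have "mk f \<in> gg j" if j: "j \<in> Idx" "j \<noteq> i" for j
  proof (cases j)
    case (Inl T)
    then have T: "T \<in> Cs" "T \<noteq> S" using j \<open>i = Inl S\<close> unfolding Idx_def by auto
    then show ?thesis using Inl mk_gg_Inl[OF T(1), of f] unfolding f_def by simp
  next
    case (Inr B)
    then have B: "B \<in> MBs" using j unfolding Idx_def by auto
    then have mb: "minimal_balanced B" unfolding MBs_def by auto
    have "(\<Sum>X\<in>B. bal_weight B X * f X) \<le> 0"
      using w_nonneg[OF mb] unfolding f_def by (intro sum_nonpos) auto
    then have "(\<Sum>X\<in>B. bal_weight B X * f X) \<le> 1" by linarith
    then show ?thesis using Inr mk_gg_Inr[OF B, of f] by simp
  qed
  ultimately show ?thesis using mk_Aff by blast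
next
  case (Inr B)
  then have B: "B \<in> MBs" using assms unfolding Idx_def by auto
  then have mb: "minimal_balanced B" unfolding MBs_def by auto
  define E where "E = insert 1 (eps B ` (MBs - {B}))"
  define \<delta> where "\<delta> = Min E"
  have finE: "finite E" unfolding E_def by simp
  have "\<delta> \<in> E" unfolding \<delta>_def using finE E_def by (intro Min_in) auto
  then have dpos: "\<delta> > 0" unfolding E_def using eps_pos mb MBs_def by auto
  have dle1: "\<delta> \<le> 1" unfolding \<delta>_def using finE E_def by (intro Min_le) auto
  have dle: "\<delta> \<le> eps B B'" if "B' \<in> MBs" "B' \<noteq> B" for B'
    unfolding \<delta>_def using finE E_def that by (intro Min_le) auto
  define D where "D = 2 * real CARD('n) - \<delta> / 2"
  have Dpos: "D > 0" unfolding D_def using card_ge1[where 'n='n] dle1 by linarith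
  have "mk (pt B D) \<notin> gg i"
  proof -
    have "(\<Sum>S\<in>B. bal_weight B S * pt B D S) = 2 * real CARD('n) / D"
      using pt_sum[OF mb, of B D] eps_self[of B] by simp
    also have "\<dots> > 1" using Dpos dpos unfolding D_def by (simp add: field_simps)
    finally show ?thesis using Inr mk_gg_Inr[OF B, of "pt B D"] by simp
  qed
  moreover have "mk (pt B D) \<in> gg j" if j: "j \<in> Idx" "j \<noteq> i" for j
  proof (cases j)
    case (Inl T)
    then have "T \<in> Cs" using j unfolding Idx_def by auto
    then show ?thesis using Inl mk_gg_Inl pt_pos Dpos less_imp_le by metis
  next
    case (Inr B')
    then have B': "B' \<in> MBs" "B' \<noteq> B" using j \<open>i = Inr B\<close> unfolding Idx_def by auto
    then have mb': "minimal_balanced B'" unfolding MBs_def by auto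
    have "(\<Sum>S\<in>B'. bal_weight B' S * pt B D S) = (2 * real CARD('n) - eps B B') / D"
      using pt_sum[OF mb'] by simp
    also have "\<dots> \<le> 1" using Dpos dle[OF B'] dpos unfolding D_def by (simp add: field_simps)
    finally show ?thesis using Inr mk_gg_Inr[OF B'(1), of "pt B D"] by simp
  qed
  ultimately show ?thesis using mk_Aff by blast
qed

lemma eq_Inl: "Aa (Inl S) \<bullet> x = bb (Inl S) \<longleftrightarrow> x $ S = 0"
  by (auto simp: inner_Inl bb_def)

lemma eq_Inr: "B \<in> MBs \<Longrightarrow> Aa (Inr B) \<bullet> x = bb (Inr B) \<longleftrightarrow> (\<Sum>S\<in>B. bal_weight B S * x $ S) = 1"
  by (auto simp: inner_Inr bb_def)

lemma wit:
  fixes i :: "('n::finite) set + 'n set set"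
  assumes "i \<in> Idx" "j \<in> Idx" "j \<noteq> i"
  shows "\<exists>x\<in>BG_plus. Aa i \<bullet> x = bb i \<and> Aa j \<bullet> x \<noteq> bb j"
proof (cases i)
  case (Inl S)
  then have S: "S \<in> Cs" using assms unfolding Idx_def by auto
  show ?thesis
  proof (cases j)
    case (Inl T)
    then have T: "T \<in> Cs" "T \<noteq> S" using assms \<open>i = Inl S\<close> unfolding Idx_def by auto
    define f :: "'n set \<Rightarrow> real" where "f = (\<lambda>X. if X = T then 1 else 0)"
    have "mk f \<in> BG_plus" unfolding mk_BG
    proof (intro conjI ballI)
      fix S' :: "'n set" assume "S' \<in> Cs" then show "0 \<le> f S'" unfolding f_def by simp
    next
      fix B :: "'n set set" assume B: "B \<in> MBs"
      then have mb: "minimal_balanced B" unfolding MBs_def by auto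
      have "(\<Sum>S\<in>B. bal_weight B S * f S) = (\<Sum>S\<in>B. if S = T then bal_weight B S else 0)"
        unfolding f_def by (intro sum.cong) auto
      also have "\<dots> = (if T \<in> B then bal_weight B T else 0)" by (simp add: sum.delta')
      also have "\<dots> \<le> 1" using w_le1[OF mb] T unfolding Cs_def by auto
      finally show "(\<Sum>S\<in>B. bal_weight B S * f S) \<le> 1" .
    qed
    moreover have "mk f $ S = 0" "mk f $ T \<noteq> 0"
      using mk_nth[OF S, of f] mk_nth[OF T(1), of f] T(2) unfolding f_def by simp_all
    ultimately show ?thesis using Inl \<open>i = Inl S\<close> eq_Inl by metis
  next
    case (Inr B)
    then have B: "B \<in> MBs" using assms unfolding Idx_def by auto
    have "mk (\<lambda>_. 0) \<in> BG_plus" unfolding mk_BG by simp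
    moreover have "mk (\<lambda>_. 0) $ S = 0" using S mk_nth by auto
    moreover have "(\<Sum>S\<in>B. bal_weight B S * mk (\<lambda>_. 0) $ S) \<noteq> 1" using mk_sum[OF B] by simp
    ultimately show ?thesis using Inr B \<open>i = Inl S\<close> eq_Inl eq_Inr by metis
  qed
next
  case (Inr B)
  then have B: "B \<in> MBs" using assms unfolding Idx_def by auto
  then have mb: "minimal_balanced B" unfolding MBs_def by auto
  define D where "D = 2 * real CARD('n)"
  have Dpos: "D > 0" unfolding D_def using card_ge1[where 'n='n] by linarith
  have sumB': "(\<Sum>S\<in>B'. bal_weight B' S * pt B D S) = 1 - eps B B' / D" if "B' \<in> MBs" for B'
  proof -
    have "minimal_balanced B'" using that unfolding MBs_def by auto
    from pt_sum[OF this] show ?thesis using Dpos unfolding D_def by (simp add: field_simps)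
  qed
  have inBG: "mk (pt B D) \<in> BG_plus" unfolding mk_BG
  proof (intro conjI ballI)
    fix S :: "'n set" assume "S \<in> Cs" then show "0 \<le> pt B D S" using pt_pos Dpos less_imp_le by blast
  next
    fix B' :: "'n set set" assume B': "B' \<in> MBs"
    have "eps B B' \<ge> 0" using eps_nonneg B' unfolding MBs_def by auto
    then show "(\<Sum>S\<in>B'. bal_weight B' S * pt B D S) \<le> 1" using sumB'[OF B'] Dpos by simp
  qed
  have e0: "eps B B = 0" by (rule eps_self)
  have onB: "Aa i \<bullet> mk (pt B D) = bb i" using Inr eq_Inr[OF B] mk_sum[OF B] sumB'[OF B] e0 by simp
  show ?thesis
  proof (cases j)
    case (Inl T)
    then have T: "T \<in> Cs" using assms unfolding Idx_def by auto
    have "mk (pt B D) $ T \<noteq> 0" using mk_nth[OF T] pt_pos[OF T Dpos, of B] by simp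
    then show ?thesis using inBG onB Inl eq_Inl by metis
  next
    case (Inr B')
    then have B': "B' \<in> MBs" "B' \<noteq> B" using assms \<open>i = Inr B\<close> unfolding Idx_def by auto
    have "eps B B' > 0" using eps_pos B' mb unfolding MBs_def by auto
    then have "(\<Sum>S\<in>B'. bal_weight B' S * mk (pt B D) $ S) \<noteq> 1"
      using mk_sum[OF B'(1)] sumB'[OF B'(1)] Dpos by simp
    then show ?thesis using inBG onB Inr eq_Inr[OF B'(1)] by metis
  qed
qed



lemma affine_Aff: "affine Aff"
  unfolding affine_def Aff_def by simp

lemma Aff_hull: "affine hull (BG_plus :: (real ^ ('n::finite set)) set) = Aff"
proof
  show "affine hull BG_plus \<subseteq> (Aff :: (real ^ ('n set)) set)"
    by (rule hull_minimal) (auto simp: BG_char affine_Aff)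
next
  show "(Aff :: (real ^ ('n set)) set) \<subseteq> affine hull BG_plus"
  proof
    fix v :: "real ^ ('n set)" assume v: "v \<in> Aff"
    define a :: "real ^ ('n set)" where "a = mk (\<lambda>_. 0)"
    have aBG: "a \<in> BG_plus" unfolding a_def mk_BG by simp
    then have aH: "a \<in> affine hull BG_plus" by (rule hull_inc)
    have ax: "axis T 1 \<in> (\<lambda>x. - a + x) ` BG_plus" if T: "T \<in> Cs" for T
    proof -
      define f :: "'n set \<Rightarrow> real" where "f = (\<lambda>X. if X = T then 1 else 0)"
      have "mk f \<in> BG_plus" unfolding mk_BG
      proof (intro conjI ballI)
        fix S' :: "'n set" assume "S' \<in> Cs" then show "0 \<le> f S'" unfolding f_def by simp
      next
        fix B :: "'n set set" assume B: "B \<in> MBs"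
        then have mb: "minimal_balanced B" unfolding MBs_def by auto
        have "(\<Sum>S\<in>B. bal_weight B S * f S) = (\<Sum>S\<in>B. if S = T then bal_weight B S else 0)"
          unfolding f_def by (intro sum.cong) auto
        also have "\<dots> = (if T \<in> B then bal_weight B T else 0)" by (simp add: sum.delta')
        also have "\<dots> \<le> 1" using w_le1[OF mb] T unfolding Cs_def by auto
        finally show "(\<Sum>S\<in>B. bal_weight B S * f S) \<le> 1" .
      qed
      moreover have "axis T 1 = - a + mk f"
        using T unfolding a_def mk_def f_def axis_def Cs_def by (auto simp: vec_eq_iff)
      ultimately show ?thesis by blast
    qed
    have eq: "v - a = (\<Sum>T\<in>Cs. (v $ T) *\<^sub>R axis T 1)"
    proof (subst vec_eq_iff, intro allI)
      fix X :: "'n set"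
      have "(\<Sum>T\<in>Cs. (v $ T) *\<^sub>R axis T 1) $ X = (\<Sum>T\<in>Cs. if X = T then v $ T else 0)"
        unfolding sum_component by (intro sum.cong) (auto simp: axis_def)
      also have "\<dots> = (if X \<in> Cs then v $ X else 0)" by (simp add: sum.delta)
      finally show "(v - a) $ X = (\<Sum>T\<in>Cs. (v $ T) *\<^sub>R axis T 1) $ X"
        using v unfolding a_def mk_def Aff_def Cs_def by auto
    qed
    have "v - a \<in> span ((\<lambda>x. - a + x) ` BG_plus)"
      unfolding eq by (intro span_sum span_scale span_base ax)
    then have "a + (v - a) \<in> (\<lambda>x. a + x) ` span ((\<lambda>x. - a + x) ` BG_plus)" by blast
    then show "v \<in> affine hull BG_plus" using affine_hull_span_gen[OF aH] by simp
  qed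
qed


lemma Aa_nz: "i \<in> Idx \<Longrightarrow> Aa i \<noteq> 0"
proof (cases i)
  case (Inl S) then show ?thesis unfolding Aa_def by (simp add: axis_eq_0_iff)
next
  case (Inr B)
  assume "i \<in> Idx"
  then have B: "B \<in> MBs" using Inr unfolding Idx_def by auto
  then have mb: "minimal_balanced B" unfolding MBs_def by auto
  obtain S where S: "S \<in> B"
  proof (cases "B = {}")
    case True
    then have "(\<Sum>S\<in>{S\<in>B. undefined \<in> S}. bal_weight B S) = 0" by simp
    then show ?thesis using w_sum[OF mb] by simp
  qed auto
  have "(Aa i) $ S \<noteq> 0" using Inr w_pos[OF mb S] unfolding Aa_def by simp
  then show ?thesis by auto
qed

lemma card_Cs: "card (Cs :: ('n::finite) set set) = 2 ^ CARD('n) - 2"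
proof -
  have eq: "Cs = UNIV - {{}, UNIV :: 'n set}" unfolding Cs_def by auto
  have "card (Cs :: 'n set set) = card (UNIV :: 'n set set) - card {{}, UNIV :: 'n set}"
    unfolding eq by (rule card_Diff_subset) auto
  moreover have "card (UNIV :: 'n set set) = 2 ^ CARD('n)"
    using card_Pow[of "UNIV :: 'n set"] by simp
  moreover have "card {{}, UNIV :: 'n set} = 2" by simp
  ultimately show ?thesis by simp
qed

lemma mb_UNIV: "minimal_balanced {UNIV :: ('n::finite) set}"
  unfolding minimal_balanced_def
proof (intro conjI allI impI balanced_UNIV)
  fix B' :: "'n set set" assume "B' \<subset> {UNIV}"
  then have "B' = {}" by auto
  then show "\<not> balanced B'" unfolding balanced_def by simp
qed

lemma card_MBs: "card (MBs :: ('n::finite) set set set) = num_min_bal TYPE('n) - 1"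
proof -
  have eq: "MBs = {B :: 'n set set. minimal_balanced B} - {{UNIV}}" unfolding MBs_def by auto
  show ?thesis unfolding eq num_min_bal_def by (rule card_Diff_singleton) (simp add: mb_UNIV)
qed

lemma num_pos: "num_min_bal TYPE('n::finite) \<ge> 1"
  unfolding num_min_bal_def using mb_UNIV[where 'n='n]
  by (metis (mono_tags) One_nat_def Suc_leI card_gt_0_iff empty_iff finite mem_Collect_eq)

theorem theorem16:
  assumes "CARD('n::finite) \<ge> 2"
  shows "(\<forall>S::'n set. S \<noteq> {} \<and> S \<noteq> UNIV \<longrightarrow>
            (BG_plus \<inter> {v. v $ S = 0}) facet_of (BG_plus :: (real ^ 'n set) set))
       \<and> (\<forall>B::'n set set. minimal_balanced B \<and> B \<noteq> {UNIV} \<longrightarrow>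
            (BG_plus \<inter> {v. (\<Sum>S\<in>B. bal_weight B S * v $ S) = 1})
               facet_of (BG_plus :: (real ^ 'n set) set))
       \<and> card {F. F facet_of (BG_plus :: (real ^ 'n set) set)}
            = 2 ^ CARD('n) + num_min_bal TYPE('n) - 3"
proof -
  let ?S = "BG_plus :: (real ^ 'n set) set"
  let ?F = "gg ` (Idx :: ('n set + 'n set set) set)"
  define H where "H = (\<lambda>i :: 'n set + 'n set set. ?S \<inter> {x. Aa i \<bullet> x = bb i})"
  have finI: "finite (Idx :: ('n set + 'n set set) set)" by simp
  have injg: "inj_on gg (Idx :: ('n set + 'n set set) set)"
  proof (rule inj_onI)
    fix i j :: "'n set + 'n set set" assume ij: "i \<in> Idx" "j \<in> Idx" "gg i = gg j"
    show "i = j"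
    proof (rule ccontr)
      assume "i \<noteq> j"
      then obtain x where "x \<notin> gg i" "x \<in> gg j" using viol[OF ij(1)] ij(2) by metis
      then show False using ij(3) by simp
    qed
  qed
  define a :: "(real ^ 'n set) set \<Rightarrow> real ^ 'n set" where "a = (\<lambda>h. Aa (inv_into Idx gg h))"
  define b :: "(real ^ 'n set) set \<Rightarrow> real" where "b = (\<lambda>h. bb (inv_into Idx gg h))"
  have ab_g: "a (gg i) = Aa i" "b (gg i) = bb i" if "i \<in> Idx" for i :: "'n set + 'n set set"
    unfolding a_def b_def using inv_into_f_f[OF injg that] by simp_all
  have faceq: "a h \<noteq> 0 \<and> h = {x. a h \<bullet> x \<le> b h}" if hF: "h \<in> ?F" for h
  proof -
    obtain i where i: "i \<in> Idx" "h = gg i" using hF by auto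
    show ?thesis using ab_g[OF i(1)] Aa_nz[OF i(1)] i(2) unfolding gg_def by simp
  qed
  have seq: "?S = affine hull ?S \<inter> \<Inter>?F"
    unfolding Aff_hull using BG_char by auto
  have psub: "?S \<subset> affine hull ?S \<inter> \<Inter>F'" if FF: "F' \<subset> ?F" for F'
  proof -
    obtain h where h: "h \<in> ?F" "h \<notin> F'" using FF by auto
    then obtain i where i: "i \<in> Idx" "h = gg i" by auto
    obtain x where x: "x \<in> Aff" "x \<notin> gg i" "\<forall>j\<in>Idx. j \<noteq> i \<longrightarrow> x \<in> gg j"
      using viol[OF i(1)] by blast
    have "x \<in> \<Inter>F'"
    proof
      fix h' assume "h' \<in> F'"
      then obtain j where j: "j \<in> Idx" "h' = gg j" using FF by auto
      then have "j \<noteq> i" using h i \<open>h' \<in> F'\<close> by auto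
      then show "x \<in> h'" using x j by auto
    qed
    moreover have "x \<notin> ?S" using x i BG_char by auto
    moreover have "?S \<subseteq> affine hull ?S \<inter> \<Inter>F'"
    proof -
      have "?S \<subseteq> \<Inter>?F" using seq by blast
      moreover have "\<Inter>?F \<subseteq> \<Inter>F'" using FF by (intro Inter_anti_mono) auto
      ultimately show ?thesis using hull_subset[of ?S affine] by blast
    qed
    ultimately show ?thesis unfolding Aff_hull using x by blast
  qed
  have fac: "C facet_of ?S \<longleftrightarrow> (\<exists>h. h \<in> ?F \<and> C = ?S \<inter> {x. a h \<bullet> x = b h})" for C
    by (rule facet_of_polyhedron_explicit[OF _ seq faceq psub]) simp_all
  have fac2: "C facet_of ?S \<longleftrightarrow> C \<in> H ` Idx" for C
    unfolding fac H_def using ab_g by auto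
  have injH: "inj_on H Idx"
  proof (rule inj_onI)
    fix i j :: "'n set + 'n set set" assume ij: "i \<in> Idx" "j \<in> Idx" "H i = H j"
    show "i = j"
    proof (rule ccontr)
      assume "i \<noteq> j"
      then obtain x where "x \<in> ?S" "Aa i \<bullet> x = bb i" "Aa j \<bullet> x \<noteq> bb j"
        using wit[OF ij(1) ij(2)] by metis
      then have "x \<in> H i" "x \<notin> H j" unfolding H_def by auto
      then show False using ij(3) by simp
    qed
  qed
  have "{F. F facet_of ?S} = H ` Idx" using fac2 by auto
  then have "card {F. F facet_of ?S} = card (Idx :: ('n set + 'n set set) set)"
    using card_image[OF injH] by simp
  also have "\<dots> = card (Cs :: 'n set set) + card (MBs :: 'n set set set)"
    unfolding Idx_def by (subst card_Un_disjoint) (auto simp: card_image)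
  also have "\<dots> = 2 ^ CARD('n) + num_min_bal TYPE('n) - 3"
  proof -
    have "(2::nat) ^ CARD('n) \<ge> 2 ^ 1" using assms by (intro power_increasing) auto
    then show ?thesis unfolding card_Cs card_MBs using num_pos[where 'n='n] by simp
  qed
  finally have P3: "card {F. F facet_of ?S} = 2 ^ CARD('n) + num_min_bal TYPE('n) - 3" .
  have P1: "(BG_plus \<inter> {v. v $ S = 0}) facet_of ?S" if "S \<noteq> {} \<and> S \<noteq> UNIV" for S :: "'n set"
  proof -
    have "Inl S \<in> (Idx :: ('n set + 'n set set) set)" using that unfolding Idx_def Cs_def by auto
    moreover have "H (Inl S) = BG_plus \<inter> {v. v $ S = 0}" unfolding H_def using eq_Inl by auto
    ultimately show ?thesis using fac2 by (metis image_eqI)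
  qed
  have P2: "(BG_plus \<inter> {v. (\<Sum>S\<in>B. bal_weight B S * v $ S) = 1}) facet_of ?S"
    if "minimal_balanced B \<and> B \<noteq> {UNIV}" for B :: "'n set set"
  proof -
    have B: "B \<in> MBs" using that unfolding MBs_def by auto
    then have "Inr B \<in> (Idx :: ('n set + 'n set set) set)" unfolding Idx_def by auto
    moreover have "H (Inr B) = BG_plus \<inter> {v. (\<Sum>S\<in>B. bal_weight B S * v $ S) = 1}"
      unfolding H_def using eq_Inr[OF B] by auto
    ultimately show ?thesis using fac2 by (metis image_eqI)
  qed
  show ?thesis using P1 P2 P3 by blast
qed


end
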